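(* For all $k_1,k_2\in\mathbb{R}$ with $r:=\sqrt{k_1^2+k_2^2}\le1$, $$-\arccos(k_1)-\arccos(k_2)+\arccos(r)+\frac\pi2\le k_1+k_2-r.$$ *)

theory Defs
  imports Complex_Main
begin

end

theory Submission
  imports Defs
begin

lemma psi_form:
  fixes z :: real
  assumes "0 < z" "z < 1"
  shows "(1 / sqrt (1 - z\<^sup>2) - 1) / z = z / (sqrt (1 - z\<^sup>2) * (1 + sqrt (1 - z\<^sup>2)))"
proof -
  define b where "b = sqrt (1 - z\<^sup>2)"
  have z2: "z\<^sup>2 < 1" using assms by (simp add: power_less_one_iff abs_less_iff)
  have bp: "b > 0" unfolding b_def using z2 by simp
  have bb: "b\<^sup>2 = 1 - z\<^sup>2" unfolding b_def using z2 by simp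
  have zz: "z * z = (1 - b) * (1 + b)" using bb by (simp add: power2_eq_square algebra_simps)
  have "(1 / b - 1) / z = (1 - b) / (b * z)" using bp assms by (simp add: field_simps)
  also have "\<dots> = ((1 - b) * (1 + b)) / (b * (1 + b) * z)"
  proof -
    have "1 + b \<noteq> 0" using bp by simp
    thus ?thesis by (metis mult.commute mult.left_commute nonzero_mult_divide_mult_cancel_left)
  qed
  also have "\<dots> = (z * z) / (z * (b * (1 + b)))" unfolding zz[symmetric] by (simp add: mult.commute)
  also have "\<dots> = z / (b * (1 + b))" using assms by (metis mult.commute nonzero_mult_divide_mult_cancel_left less_irrefl)
  finally have "(1 / b - 1) / z = z / (b * (1 + b))" .
  thus ?thesis unfolding b_def .
qed

lemma psi_mono:
  fixes x y :: real
  assumes "0 < x" "x \<le> y" "y < 1"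
  shows "(1 / sqrt (1 - x\<^sup>2) - 1) / x \<le> (1 / sqrt (1 - y\<^sup>2) - 1) / y"
proof -
  have x2: "x\<^sup>2 \<le> y\<^sup>2" using assms by (simp add: power_mono)
  have y2: "y\<^sup>2 < 1" using assms by (simp add: power_less_one_iff abs_less_iff)
  have x2': "x\<^sup>2 \<le> 1" using x2 y2 by simp
  have by0: "sqrt (1 - y\<^sup>2) > 0" using y2 by simp
  have bxy: "sqrt (1 - y\<^sup>2) \<le> sqrt (1 - x\<^sup>2)" using x2 by simp
  have "x / (sqrt (1 - x\<^sup>2) * (1 + sqrt (1 - x\<^sup>2))) \<le> y / (sqrt (1 - y\<^sup>2) * (1 + sqrt (1 - y\<^sup>2)))"
    apply (rule frac_le)
    using assms by0 bxy x2' by (auto intro!: mult_mono mult_pos_pos add_pos_nonneg)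
  thus ?thesis using psi_form[of x] psi_form[of y] assms by simp
qed

lemma main_nonneg:
  fixes k1 k2 :: real
  assumes "0 \<le> k1" "0 \<le> k2" "k1\<^sup>2 + k2\<^sup>2 \<le> 1"
  shows "sqrt (k1\<^sup>2 + k2\<^sup>2) + arccos (sqrt (k1\<^sup>2 + k2\<^sup>2)) + pi / 2
           \<le> k1 + arccos k1 + k2 + arccos k2"
proof -
  define c where "c = k2\<^sup>2"
  define F where "F = (\<lambda>x. x + arccos x - sqrt (x\<^sup>2 + c) - arccos (sqrt (x\<^sup>2 + c)))"
  have c0: "c \<ge> 0" unfolding c_def by simp
  have "F 0 \<le> F k1"
  proof (rule DERIV_nonneg_imp_increasing_open[OF assms(1)])
    fix \<xi> :: real assume a: "0 < \<xi>" "\<xi> < k1"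
    define s where "s = sqrt (\<xi>\<^sup>2 + c)"
    have xs: "\<xi>\<^sup>2 < k1\<^sup>2" using a by (simp add: power_strict_mono)
    have "\<xi>\<^sup>2 > 0" using a by simp
    hence sp: "s > 0" unfolding s_def using a c0 by (simp add: add_pos_nonneg)
    have s1: "s < 1" unfolding s_def using xs assms(3) c_def by simp
    have xles: "\<xi> \<le> s" unfolding s_def using c0 a by (simp add: real_le_rsqrt)
    have x1: "\<xi> < 1" using xles s1 by simp
    have d1: "(arccos has_real_derivative inverse (- sqrt (1 - \<xi>\<^sup>2))) (at \<xi>)"
      using DERIV_arccos[of \<xi>] a x1 by simp
    have d2: "((\<lambda>x. sqrt (x\<^sup>2 + c)) has_real_derivative inverse (s) / 2 * (2 * \<xi>)) (at \<xi>)"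
      unfolding s_def
      apply (rule DERIV_chain2[where f=sqrt, OF DERIV_real_sqrt])
      using a c0 apply (smt (verit) zero_less_power2)
      by (auto intro!: derivative_eq_intros)
    have d3: "((\<lambda>x. arccos (sqrt (x\<^sup>2 + c))) has_real_derivative
               inverse (- sqrt (1 - s\<^sup>2)) * (inverse (s) / 2 * (2 * \<xi>))) (at \<xi>)"
      apply (rule DERIV_chain2[where f=arccos, OF _ d2])
      unfolding s_def[symmetric] using DERIV_arccos[of s] sp s1 by simp
    define D where "D = 1 + inverse (- sqrt (1 - \<xi>\<^sup>2)) - inverse (s) / 2 * (2 * \<xi>)
               - inverse (- sqrt (1 - s\<^sup>2)) * (inverse (s) / 2 * (2 * \<xi>))"
    have dF: "(F has_real_derivative D) (at \<xi>)"
      unfolding F_def D_def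
      by (intro DERIV_diff DERIV_add d1 d2 d3 DERIV_ident)
    have "(1 / sqrt (1 - \<xi>\<^sup>2) - 1) / \<xi> \<le> (1 / sqrt (1 - s\<^sup>2) - 1) / s"
      using psi_mono[OF a(1) xles s1] .
    hence "\<xi> * ((1 / sqrt (1 - \<xi>\<^sup>2) - 1) / \<xi>) \<le> \<xi> * ((1 / sqrt (1 - s\<^sup>2) - 1) / s)"
      by (rule mult_left_mono) (use a in simp)
    hence "1 / sqrt (1 - \<xi>\<^sup>2) - 1 \<le> \<xi> * (1 / sqrt (1 - s\<^sup>2) - 1) / s"
      using a by simp
    hence "D \<ge> 0" unfolding D_def using sp
      by (simp add: field_simps inverse_eq_divide)
    thus "\<exists>y. (F has_real_derivative y) (at \<xi>) \<and> 0 \<le> y" using dF by blast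
  next
    have "k1 \<le> 1" using assms abs_square_le_1[of k1] zero_le_power2[of k2] by linarith
    have "\<And>x. x \<in> {0..k1} \<Longrightarrow> x\<^sup>2 + c \<le> 1"
    proof -
      fix x assume "x \<in> {0..k1}"
      hence "x\<^sup>2 \<le> k1\<^sup>2" by (simp add: power_mono)
      thus "x\<^sup>2 + c \<le> 1" using assms(3) c_def by simp
    qed
    thus "continuous_on {0..k1} F" unfolding F_def
      using \<open>k1 \<le> 1\<close> c0
      by (intro continuous_intros ballI conjI) (auto intro: order.trans[OF _ real_sqrt_ge_zero])
  qed
  moreover have "F 0 = pi/2 - k2 - arccos k2"
    unfolding F_def c_def using assms(2) by (simp add: arccos_0)
  moreover have "F k1 = k1 + arccos k1 - sqrt (k1\<^sup>2 + k2\<^sup>2) - arccos (sqrt (k1\<^sup>2 + k2\<^sup>2))"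
    unfolding F_def c_def by (rule refl)
  ultimately show ?thesis by linarith
qed

lemma g_abs:
  fixes k :: real
  assumes "\<bar>k\<bar> \<le> 1"
  shows "\<bar>k\<bar> + arccos \<bar>k\<bar> \<le> k + arccos k"
proof (cases "k \<ge> 0")
  case True thus ?thesis by simp
next
  case False
  define x where "x = - k"
  have x0: "0 \<le> x" "x \<le> 1" using False assms x_def by auto
  have "arccos k = pi - arccos x" unfolding x_def using arccos_minus[of x] x0 x_def by simp
  moreover have "arccos x = pi/2 - arcsin x" using arccos_arcsin_eq x0 by simp
  moreover have "x \<le> arcsin x"
  proof -
    have "0 \<le> arcsin x" using x0 by (simp add: arcsin_le_mono[of 0 x, simplified])
    hence "sin (arcsin x) \<le> arcsin x" by (rule sin_x_le_x)
    thus ?thesis using x0 by simp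
  qed
  moreover have "\<bar>k\<bar> = x" using False x_def by simp
  ultimately show ?thesis using x_def by simp
qed

theorem lemmaC6:
  fixes k1 k2 :: real
  assumes "sqrt (k1\<^sup>2 + k2\<^sup>2) \<le> 1"
  shows "- arccos k1 - arccos k2 + arccos (sqrt (k1\<^sup>2 + k2\<^sup>2)) + pi / 2
           \<le> k1 + k2 - sqrt (k1\<^sup>2 + k2\<^sup>2)"
proof -
  have s1: "k1\<^sup>2 + k2\<^sup>2 \<le> 1" using assms by simp
  have a1: "\<bar>k1\<bar> \<le> 1" using s1 abs_square_le_1[of k1] zero_le_power2[of k1] zero_le_power2[of k2] by linarith
  have a2: "\<bar>k2\<bar> \<le> 1" using s1 abs_square_le_1[of k2] zero_le_power2[of k1] zero_le_power2[of k2] by linarith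
  have "sqrt (\<bar>k1\<bar>\<^sup>2 + \<bar>k2\<bar>\<^sup>2) + arccos (sqrt (\<bar>k1\<bar>\<^sup>2 + \<bar>k2\<bar>\<^sup>2)) + pi / 2
           \<le> \<bar>k1\<bar> + arccos \<bar>k1\<bar> + \<bar>k2\<bar> + arccos \<bar>k2\<bar>"
    by (rule main_nonneg) (use s1 in auto)
  hence "sqrt (k1\<^sup>2 + k2\<^sup>2) + arccos (sqrt (k1\<^sup>2 + k2\<^sup>2)) + pi / 2
           \<le> \<bar>k1\<bar> + arccos \<bar>k1\<bar> + \<bar>k2\<bar> + arccos \<bar>k2\<bar>" by (simp only: power2_abs)
  thus ?thesis using g_abs[OF a1] g_abs[OF a2] by linarith
qed

end
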